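(* Let $(D,\tau,d,\Delta)$ be a TMO instance and let $k\in\{1,\dots,d\}$. Let $D'_k$ be the graph obtained by identifying the sink of the gadget $G_k$ with the source $s$ of $D$ (so $D'_k$ has source $s'$ and sink $t$, and travel times $\tau$ on $D$ and as specified on $G_k$). Then every convoy routing for $(D,\tau,d,\Delta)$ using exactly $k$ paths can be transformed into $k$ pairwise arc-disjoint $s'$-$t$-paths in $D'_k$ whose maximum length equals the makespan of the convoy routing, and conversely every collection of $k$ pairwise arc-disjoint $s'$-$t$-paths in $D'_k$ can be transformed into a convoy routing for $(D,\tau,d,\Delta)$ using $k$ paths whose makespan equals the maximum length of the paths. In particular, the minimum makespan over convoy routings with exactly $k$ paths equals the optimum of \textsc{Min-Max Disjoint Paths} on $D'_k$ with $k$ paths.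
   Context: TMO instance $(D,\tau,d,\Delta)$: directed graph $D=(V,A)$ with source $s$, sink $t$, travel times $\tau:A\to\mathbb{Z}_{\ge0}$, $d\in\mathbb{Z}_{\ge1}$ trains and headway $\Delta\in\mathbb{Z}_{\ge1}$. A convoy routing $(\boldsymbol{P},\boldsymbol{\sigma})$ consists of $k\le d$ pairwise arc-disjoint $s$-$t$-paths $P_1,\dots,P_k$ in $D$ and $\boldsymbol{\sigma}\in\mathbb{Z}_{\ge1}^k$ with $\sum_i\sigma_i=d$; its makespan is $\max_{i\in[k]}\{\tau(P_i)+(\sigma_i-1)\Delta\}$, where $\tau(P)=\sum_{a\in P}\tau_a$. The gadget $G_k$ is a bundle graph from $s'$ to its sink: a sequence of $d-k$ consecutive bundles (vertices $u_0=s',u_1,\dots,u_{d-k}$), where the $j$-th bundle consists of $k$ parallel arcs from $u_{j-1}$ to $u_j$, exactly one with travel time $\Delta$ and $k-1$ with travel time $0$; if $d=k$ the gadget is the single vertex $s'=s$. \textsc{Min-Max Disjoint Paths}: find $k$ pairwise arc-disjoint source-sink paths minimizing the maximum path length. *)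

theory Defs
  imports Main
begin

fun is_walk :: "('a \<Rightarrow> 'v) \<Rightarrow> ('a \<Rightarrow> 'v) \<Rightarrow> 'v \<Rightarrow> 'a list \<Rightarrow> 'v \<Rightarrow> bool" where
  "is_walk ta ha u [] w = (u = w)"
| "is_walk ta ha u (a # ps) w = (ta a = u \<and> is_walk ta ha (ha a) ps w)"

definition is_path :: "'a set \<Rightarrow> ('a \<Rightarrow> 'v) \<Rightarrow> ('a \<Rightarrow> 'v) \<Rightarrow> 'v \<Rightarrow> 'a list \<Rightarrow> 'v \<Rightarrow> bool" where
  "is_path A ta ha u P w \<longleftrightarrow> set P \<subseteq> A \<and> is_walk ta ha u P w \<and> distinct (u # map ha P)"

definition path_length :: "('a \<Rightarrow> nat) \<Rightarrow> 'a list \<Rightarrow> nat" where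
  "path_length \<tau> P = sum_list (map \<tau> P)"

definition arc_disjoint :: "nat \<Rightarrow> (nat \<Rightarrow> 'a list) \<Rightarrow> bool" where
  "arc_disjoint k P \<longleftrightarrow> (\<forall>i<k. \<forall>j<k. i \<noteq> j \<longrightarrow> set (P i) \<inter> set (P j) = {})"

definition disjoint_paths :: "'a set \<Rightarrow> ('a \<Rightarrow> 'v) \<Rightarrow> ('a \<Rightarrow> 'v) \<Rightarrow> 'v \<Rightarrow> 'v \<Rightarrow> nat \<Rightarrow> (nat \<Rightarrow> 'a list) \<Rightarrow> bool" where
  "disjoint_paths A ta ha u w k P \<longleftrightarrow> (\<forall>i<k. is_path A ta ha u (P i) w) \<and> arc_disjoint k P"

definition max_length :: "('a \<Rightarrow> nat) \<Rightarrow> nat \<Rightarrow> (nat \<Rightarrow> 'a list) \<Rightarrow> nat" where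
  "max_length \<tau> k P = Max ((\<lambda>i. path_length \<tau> (P i)) ` {..<k})"

definition convoy_routing :: "'a set \<Rightarrow> ('a \<Rightarrow> 'v) \<Rightarrow> ('a \<Rightarrow> 'v) \<Rightarrow> 'v \<Rightarrow> 'v \<Rightarrow> nat \<Rightarrow> nat
    \<Rightarrow> (nat \<Rightarrow> 'a list) \<Rightarrow> (nat \<Rightarrow> nat) \<Rightarrow> bool" where
  "convoy_routing A ta ha s t d k P \<sigma> \<longleftrightarrow>
     1 \<le> k \<and> k \<le> d \<and> disjoint_paths A ta ha s t k P \<and>
     (\<forall>i<k. 1 \<le> \<sigma> i) \<and> (\<Sum>i<k. \<sigma> i) = d"

definition makespan :: "('a \<Rightarrow> nat) \<Rightarrow> nat \<Rightarrow> nat \<Rightarrow> (nat \<Rightarrow> 'a list) \<Rightarrow> (nat \<Rightarrow> nat) \<Rightarrow> nat" where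
  "makespan \<tau> \<Delta> k P \<sigma> = Max ((\<lambda>i. path_length \<tau> (P i) + (\<sigma> i - 1) * \<Delta>) ` {..<k})"

text \<open>The graph D'_k: arcs Inl a for arcs a of D, and Inr (j,i) for the
  (j+1)-th bundle (j < d-k), i-th parallel arc (i < k); arc i = 0 has travel
  time Delta, the others 0. Bundle vertices u_j are Inr j for j < d-k, and
  u_(d-k) is identified with Inl s.\<close>

definition gvert :: "nat \<Rightarrow> nat \<Rightarrow> 'v \<Rightarrow> nat \<Rightarrow> 'v + nat" where
  "gvert d k s j = (if j = d - k then Inl s else Inr j)"

definition Dk_arcs :: "'a set \<Rightarrow> nat \<Rightarrow> nat \<Rightarrow> ('a + nat \<times> nat) set" where
  "Dk_arcs A d k = Inl ` A \<union> {Inr (j, i) | j i. j < d - k \<and> i < k}"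

fun Dk_tail :: "('a \<Rightarrow> 'v) \<Rightarrow> nat \<Rightarrow> nat \<Rightarrow> 'v \<Rightarrow> ('a + nat \<times> nat) \<Rightarrow> 'v + nat" where
  "Dk_tail ta d k s (Inl a) = Inl (ta a)"
| "Dk_tail ta d k s (Inr (j, i)) = gvert d k s j"

fun Dk_head :: "('a \<Rightarrow> 'v) \<Rightarrow> nat \<Rightarrow> nat \<Rightarrow> 'v \<Rightarrow> ('a + nat \<times> nat) \<Rightarrow> 'v + nat" where
  "Dk_head ha d k s (Inl a) = Inl (ha a)"
| "Dk_head ha d k s (Inr (j, i)) = gvert d k s (Suc j)"

fun Dk_time :: "('a \<Rightarrow> nat) \<Rightarrow> nat \<Rightarrow> ('a + nat \<times> nat) \<Rightarrow> nat" where
  "Dk_time \<tau> \<Delta> (Inl a) = \<tau> a"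
| "Dk_time \<tau> \<Delta> (Inr (j, i)) = (if i = 0 then \<Delta> else 0)"

definition Dk_source :: "nat \<Rightarrow> nat \<Rightarrow> 'v \<Rightarrow> 'v + nat" where
  "Dk_source d k s = gvert d k s 0"

end

theory Submission
  imports Defs
begin



lemma walk_append: "is_walk ta ha u (xs@ys) w \<longleftrightarrow> (\<exists>v. is_walk ta ha u xs v \<and> is_walk ta ha v ys w)"
  by (induction xs arbitrary: u) auto

lemma walk_Inl: "is_walk (Dk_tail ta d k s) (Dk_head ha d k s) (Inl x) (map Inl P) (Inl y) \<longleftrightarrow> is_walk ta ha x P y"
  by (induction P arbitrary: x) auto

lemma gadget_walk: "m \<le> d - k \<Longrightarrow> is_walk (Dk_tail ta d k s) (Dk_head ha d k s) (gvert d k s m)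
   (map (\<lambda>j. Inr (j, c j)) [m..<d-k]) (Inl s)"
proof (induction "d - k - m" arbitrary: m)
  case 0
  then show ?case by (simp add: gvert_def)
next
  case (Suc x)
  then have "m < d - k" by auto
  then have "[m..<d-k] = m # [Suc m..<d-k]" by (simp add: upt_conv_Cons)
  with Suc show ?case by simp
qed

lemma gadget_heads: "m \<le> d - k \<Longrightarrow> gvert d k s m # map (Dk_head ha d k s) (map (\<lambda>j. Inr (j, c j)) [m..<d-k])
   = map Inr [m..<d-k] @ [Inl s]"
proof (induction "d - k - m" arbitrary: m)
  case 0
  then show ?case by (simp add: gvert_def)
next
  case (Suc x)
  then have "m < d - k" by auto
  then have "[m..<d-k] = m # [Suc m..<d-k]" by (simp add: upt_conv_Cons)
  with Suc show ?case using \<open>m < d - k\<close> by (simp add: gvert_def)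
qed

lemma struct_base: "set Q \<subseteq> Dk_arcs A d k \<Longrightarrow> is_walk (Dk_tail ta d k s) (Dk_head ha d k s) (Inl x) Q (Inl y)
  \<Longrightarrow> \<exists>P. Q = map Inl P \<and> set P \<subseteq> A \<and> is_walk ta ha x P y"
proof (induction Q arbitrary: x)
  case Nil
  then show ?case by auto
next
  case (Cons a Q)
  then have aA: "a \<in> Dk_arcs A d k" by auto
  show ?case
  proof (cases a)
    case (Inl b)
    have "\<exists>P. Q = map Inl P \<and> set P \<subseteq> A \<and> is_walk ta ha (ha b) P y"
      using Cons.IH[of "ha b"] Cons.prems Inl by auto
    then obtain P where "Q = map Inl P" "set P \<subseteq> A" "is_walk ta ha (ha b) P y"
      by blast
    moreover have "b \<in> A" using aA Inl by (auto simp: Dk_arcs_def)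
    ultimately show ?thesis using Inl Cons.prems by (intro exI[of _ "b # P"]) auto
  next
    case (Inr p)
    then obtain j i where "a = Inr (j, i)" "j < d - k" using aA by (auto simp: Dk_arcs_def)
    then show ?thesis using Cons.prems by (auto simp: gvert_def)
  qed
qed

lemma struct_gadget: "m \<le> d - k \<Longrightarrow> set Q \<subseteq> Dk_arcs A d k \<Longrightarrow>
  is_walk (Dk_tail ta d k s) (Dk_head ha d k s) (gvert d k s m) Q (Inl y) \<Longrightarrow>
  \<exists>c P. Q = map (\<lambda>j. Inr (j, c j)) [m..<d-k] @ map Inl P \<and> (\<forall>j\<in>{m..<d-k}. c j < k)
     \<and> set P \<subseteq> A \<and> is_walk ta ha s P y"
proof (induction "d - k - m" arbitrary: m Q)
  case 0
  then have "m = d - k" by auto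
  then have "gvert d k s m = Inl s" by (simp add: gvert_def)
  then obtain P where "Q = map Inl P \<and> set P \<subseteq> A \<and> is_walk ta ha s P y"
    using struct_base 0 by metis
  then show ?case using \<open>m = d - k\<close> by auto
next
  case (Suc x)
  then have mlt: "m < d - k" by auto
  then have gm: "gvert d k s m = Inr m" by (simp add: gvert_def)
  then obtain a Q' where Q: "Q = a # Q'" using Suc.prems by (cases Q) auto
  have aA: "a \<in> Dk_arcs A d k" using Q Suc.prems by auto
  have ta: "Dk_tail ta d k s a = Inr m" using Q Suc.prems gm by auto
  obtain i where ai: "a = Inr (m, i)" "i < k"
  proof (cases a)
    case (Inl b) then show ?thesis using ta by auto
  next
    case (Inr p)
    then obtain j i where "a = Inr (j, i)" "j < d - k" "i < k" using aA by (auto simp: Dk_arcs_def)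
    then show ?thesis using ta that by (auto simp: gvert_def split: if_splits)
  qed
  have w: "is_walk (Dk_tail ta d k s) (Dk_head ha d k s) (gvert d k s (Suc m)) Q' (Inl y)"
    using Suc.prems Q ai by auto
  obtain c P where cP: "Q' = map (\<lambda>j. Inr (j, c j)) [Suc m..<d-k] @ map Inl P"
     "\<forall>j\<in>{Suc m..<d-k}. c j < k" "set P \<subseteq> A" "is_walk ta ha s P y"
  proof -
    have xe: "x = d - k - Suc m" using Suc.hyps(2) by arith
    have "set Q' \<subseteq> Dk_arcs A d k" using Suc.prems Q by auto
    then show ?thesis using Suc.hyps(1)[OF xe _ _ w] mlt that by auto
  qed
  have up: "[m..<d-k] = m # [Suc m..<d-k]" using mlt by (simp add: upt_conv_Cons)
  have "map (\<lambda>j. Inr (j, (c(m:=i)) j)) [Suc m..<d-k] = map (\<lambda>j. Inr (j, c j)) [Suc m..<d-k]"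
    by (rule map_cong) auto
  then have "Q = map (\<lambda>j. Inr (j, (c(m:=i)) j)) [m..<d-k] @ map Inl P"
    using up Q ai cP by simp
  moreover have "\<forall>j\<in>{m..<d-k}. (c(m:=i)) j < k" using cP(2) ai by auto
  ultimately show ?case using cP by blast
qed

lemma gadget_len: "path_length (Dk_time \<tau> \<Delta>) (map (\<lambda>j. Inr (j, c j)) [0..<n] @ map Inl P)
   = \<Delta> * card {j. j < n \<and> c j = 0} + path_length \<tau> P"
proof -
  have "sum_list (map (Dk_time \<tau> \<Delta>) (map (\<lambda>j. Inr (j, c j)) [0..<n]))
      = sum_list (map (\<lambda>j. if c j = 0 then \<Delta> else 0) [0..<n])"
    by (simp add: comp_def)
  also have "\<dots> = (\<Sum>j<n. if c j = 0 then \<Delta> else 0)"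
    by (simp add: sum_list_sum_nth atLeast0LessThan)
  also have "\<dots> = (\<Sum>j\<in>{j\<in>{..<n}. c j = 0}. \<Delta>)"
    by (rule sum.inter_filter[symmetric]) simp
  also have "\<dots> = \<Delta> * card {j. j < n \<and> c j = 0}"
    by (simp add: conj_commute)
  finally show ?thesis by (simp add: path_length_def comp_def)
qed

lemma path_Dk: 
  assumes "\<forall>j<d-k. c j < k" "is_path A ta ha s P t"
  shows "is_path (Dk_arcs A d k) (Dk_tail ta d k s) (Dk_head ha d k s) (Dk_source d k s)
     (map (\<lambda>j. Inr (j, c j)) [0..<d-k] @ map Inl P) (Inl t)"
proof -
  have w: "is_walk ta ha s P t" and sa: "set P \<subseteq> A" and ds: "distinct (s # map ha P)"
    using assms(2) by (auto simp: is_path_def)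
  have "set (map (\<lambda>j. Inr (j, c j)) [0..<d-k] @ map Inl P) \<subseteq> Dk_arcs A d k"
    using assms(1) sa by (auto simp: Dk_arcs_def)
  moreover have "is_walk (Dk_tail ta d k s) (Dk_head ha d k s) (Dk_source d k s)
     (map (\<lambda>j. Inr (j, c j)) [0..<d-k] @ map Inl P) (Inl t)"
    unfolding walk_append Dk_source_def
    using gadget_walk[where m=0 and d=d and k=k and s=s and ha=ha and ta=ta and c=c] walk_Inl[of ta d k s ha s P t] w by auto
  moreover have "Dk_source d k s # map (Dk_head ha d k s) (map (\<lambda>j. Inr (j, c j)) [0..<d-k] @ map Inl P)
     = map Inr [0..<d-k] @ map Inl (s # map ha P)"
    using gadget_heads[where m=0 and d=d and k=k and s=s and ha=ha and c=c] by (simp add: Dk_source_def comp_def)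
  moreover have "distinct (map Inr [0..<d-k] @ map Inl (s # map ha P))"
  proof -
    have d1: "distinct (map Inl (s # map ha P) :: ('b + nat) list)"
      using ds by (subst distinct_map) (auto simp: inj_on_def)
    have d0: "distinct (map Inr [0..<d-k] :: ('b + nat) list)"
      by (subst distinct_map) (auto simp: inj_on_def)
    have "set (map Inr [0..<d-k] :: ('b + nat) list) \<inter> set (map Inl (s # map ha P)) = {}" by auto
    then show ?thesis using d0 d1 by (simp only: distinct_append)
  qed
  ultimately show ?thesis unfolding is_path_def by metis
qed

lemma fwd:
  assumes cr: "convoy_routing A ta ha s t d k P \<sigma>"
  shows "\<exists>Q. disjoint_paths (Dk_arcs A d k) (Dk_tail ta d k s) (Dk_head ha d k s)
               (Dk_source d k s) (Inl t) k Q
             \<and> max_length (Dk_time \<tau> \<Delta>) k Q = makespan \<tau> \<Delta> k P \<sigma>"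
proof -
  define n where "n = d - k"
  have k1: "1 \<le> k" and kd: "k \<le> d" and dp: "disjoint_paths A ta ha s t k P"
    and s1: "\<forall>i<k. 1 \<le> \<sigma> i" and ssum: "(\<Sum>i<k. \<sigma> i) = d"
    using cr by (auto simp: convoy_routing_def)
  define S where "S i = (\<Sum>l<i. \<sigma> l - 1)" for i
  have "(\<Sum>l<k. \<sigma> l - 1) + k = (\<Sum>l<k. (\<sigma> l - 1) + 1)" unfolding sum.distrib by simp
  also have "\<dots> = (\<Sum>l<k. \<sigma> l)" using s1 by (intro sum.cong) auto
  finally have Sk: "S k = n" using ssum unfolding S_def n_def by simp
  have Smono: "S a \<le> S b" if "a \<le> b" for a b
    unfolding S_def using that by (intro sum_mono2) auto
  have S0: "S 0 = 0" by (simp add: S_def)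
  have SSuc: "S (Suc i) = S i + (\<sigma> i - 1)" for i by (simp add: S_def)
  define own where "own j = (LEAST i. j < S (Suc i))" for j
  have ex: "j < S (Suc (k - 1))" if "j < n" for j using that Sk k1 by simp
  have own1: "j < S (Suc (own j))" if "j < n" for j
    unfolding own_def by (rule LeastI[of "\<lambda>i. j < S (Suc i)", OF ex[OF that]])
  have own2: "\<not> j < S (Suc i')" if "i' < own j" for i' j
    using that unfolding own_def by (rule not_less_Least)
  have own_lt: "own j < k" if "j < n" for j
  proof -
    have "own j \<le> k - 1" unfolding own_def by (rule Least_le[of "\<lambda>i. j < S (Suc i)", OF ex[OF that]])
    then show ?thesis using k1 by simp
  qed
  have own_iff: "own j = i \<longleftrightarrow> S i \<le> j \<and> j < S (Suc i)" if "j < n" for i j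
  proof
    assume h: "own j = i"
    have "S i \<le> j"
    proof (cases i)
      case 0 then show ?thesis using S0 by simp
    next
      case (Suc i') then show ?thesis using own2[of i' j] h by simp
    qed
    then show "S i \<le> j \<and> j < S (Suc i)" using own1[OF that] h by simp
  next
    assume h: "S i \<le> j \<and> j < S (Suc i)"
    show "own j = i" unfolding own_def
    proof (rule Least_equality)
      show "j < S (Suc i)" using h by simp
      fix y assume "j < S (Suc y)"
      then show "i \<le> y" using h Smono[of "Suc y" i] by (cases "i \<le> y") auto
    qed
  qed
  define c where "c i j = (if i = own j then 0 else if i < own j then Suc i else i)" for i j
  have c_lt: "c i j < k" if "i < k" "j < n" for i j
    using that own_lt[OF that(2)] by (auto simp: c_def)
  have c0: "c i j = 0 \<longleftrightarrow> i = own j" for i j by (auto simp: c_def)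
  have c_inj: "c i j = c i' j \<Longrightarrow> i = i'" for i i' j by (auto simp: c_def split: if_splits)
  have card_c: "card {j. j < n \<and> c i j = 0} = \<sigma> i - 1" if "i < k" for i
  proof -
    have "S (Suc i) \<le> n" using Smono[of "Suc i" k] that Sk by simp
    then have "{j. j < n \<and> c i j = 0} = {S i..<S (Suc i)}"
    proof (intro set_eqI iffI)
      fix x assume "x \<in> {j. j < n \<and> c i j = 0}"
      then show "x \<in> {S i..<S (Suc i)}" using own_iff[of x i] c0[of i x] by auto
    next
      fix x assume "x \<in> {S i..<S (Suc i)}"
      then have "x < n" using \<open>S (Suc i) \<le> n\<close> by auto
      then show "x \<in> {j. j < n \<and> c i j = 0}" using own_iff[of x i] c0[of i x] \<open>x \<in> {S i..<S (Suc i)}\<close> by auto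
    qed
    then show ?thesis using SSuc by simp
  qed
  define Q where "Q i = map (\<lambda>j. Inr (j, c i j)) [0..<n] @ map Inl (P i)" for i
  have paths: "\<forall>i<k. is_path (Dk_arcs A d k) (Dk_tail ta d k s) (Dk_head ha d k s) (Dk_source d k s) (Q i) (Inl t)"
  proof (intro allI impI)
    fix i assume "i < k"
    have "is_path A ta ha s (P i) t" using dp \<open>i < k\<close> by (simp add: disjoint_paths_def)
    moreover have "\<forall>j<d-k. c i j < k" using c_lt \<open>i < k\<close> n_def by simp
    ultimately show "is_path (Dk_arcs A d k) (Dk_tail ta d k s) (Dk_head ha d k s) (Dk_source d k s) (Q i) (Inl t)"
      unfolding Q_def n_def by (rule path_Dk[rotated])
  qed
  have disj: "arc_disjoint k Q"
    unfolding arc_disjoint_def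
  proof (intro allI impI)
    fix i j assume "i < k" "j < k" "i \<noteq> j"
    then have "set (P i) \<inter> set (P j) = {}" using dp by (auto simp: disjoint_paths_def arc_disjoint_def)
    have sq: "set (Q l) = (\<lambda>x. Inr (x, c l x)) ` {..<n} \<union> Inl ` set (P l)" for l
      unfolding Q_def by auto
    have "(\<lambda>x. Inr (x, c i x)) ` {..<n} \<inter> (\<lambda>x. Inr (x, c j x)) ` {..<n} = {}"
      using c_inj \<open>i \<noteq> j\<close> by blast
    then show "set (Q i) \<inter> set (Q j) = {}"
      unfolding sq using \<open>set (P i) \<inter> set (P j) = {}\<close> by blast
  qed
  have len: "path_length (Dk_time \<tau> \<Delta>) (Q i) = path_length \<tau> (P i) + (\<sigma> i - 1) * \<Delta>" if "i < k" for i
    unfolding Q_def gadget_len card_c[OF that] by simp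
  have "max_length (Dk_time \<tau> \<Delta>) k Q = makespan \<tau> \<Delta> k P \<sigma>"
    unfolding max_length_def makespan_def using len by (metis (no_types, lifting) image_cong lessThan_iff)
  then show ?thesis using paths disj unfolding disjoint_paths_def by blast
qed

lemma card_as_sum: "card {j. j < (n::nat) \<and> P j} = (\<Sum>j<n. if P j then 1 else 0 :: nat)"
proof -
  have "(\<Sum>j<n. if P j then 1 else 0 :: nat) = (\<Sum>j\<in>{j\<in>{..<n}. P j}. 1)"
    by (rule sum.inter_filter[symmetric]) simp
  also have "\<dots> = card {j. j < n \<and> P j}" by (simp add: conj_commute)
  finally show ?thesis by simp
qed

lemma bwd:
  assumes dq: "disjoint_paths (Dk_arcs A d k) (Dk_tail ta d k s) (Dk_head ha d k s)
               (Dk_source d k s) (Inl t) k Q"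
    and k1: "1 \<le> k" and kd: "k \<le> d"
  shows "\<exists>P \<sigma>. convoy_routing A ta ha s t d k P \<sigma>
             \<and> makespan \<tau> \<Delta> k P \<sigma> = max_length (Dk_time \<tau> \<Delta>) k Q"
proof -
  define n where "n = d - k"
  define R where "R i c P \<longleftrightarrow> Q i = map (\<lambda>j. Inr (j, c j)) [0..<n] @ map Inl P \<and>
     (\<forall>j\<in>{0..<n}. c j < k) \<and> set P \<subseteq> A \<and> is_walk ta ha s P t" for i c P
  have qp: "is_path (Dk_arcs A d k) (Dk_tail ta d k s) (Dk_head ha d k s) (Dk_source d k s) (Q i) (Inl t)"
    if "i < k" for i using dq that by (simp add: disjoint_paths_def)
  have ex: "\<exists>c P. R i c P" if "i < k" for i
    using struct_gadget[where m=0 and d=d and k=k and Q="Q i" and A=A and ta=ta and ha=ha and s=s and y=t]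
      qp[OF that] unfolding R_def n_def is_path_def Dk_source_def by auto
  define C where "C i = (SOME c. \<exists>P. R i c P)" for i
  define PP where "PP i = (SOME P. R i (C i) P)" for i
  have RC: "R i (C i) (PP i)" if "i < k" for i
  proof -
    have "\<exists>P. R i (C i) P" unfolding C_def using someI_ex[OF ex[OF that]] .
    then show ?thesis unfolding PP_def by (rule someI_ex)
  qed
  have Qi: "Q i = map (\<lambda>j. Inr (j, C i j)) [0..<n] @ map Inl (PP i)"
    and Ck: "\<forall>j\<in>{0..<n}. C i j < k" and PA: "set (PP i) \<subseteq> A"
    and Pw: "is_walk ta ha s (PP i) t" if "i < k" for i
    using RC[OF that] unfolding R_def by auto
  have Ppath: "is_path A ta ha s (PP i) t" if "i < k" for i
  proof -
    have "distinct (Dk_source d k s # map (Dk_head ha d k s) (Q i))"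
      using qp[OF that] by (simp add: is_path_def)
    also have "Dk_source d k s # map (Dk_head ha d k s) (Q i) = map Inr [0..<d-k] @ map Inl (s # map ha (PP i))"
      unfolding Qi[OF that] n_def
      using gadget_heads[where m=0 and d=d and k=k and s=s and ha=ha and c="C i"] by (simp add: Dk_source_def comp_def)
    finally have "distinct (map Inl (s # map ha (PP i)) :: ('b + nat) list)"
      by (simp only: distinct_append)
    then have "distinct (s # map ha (PP i))" by (simp only: distinct_map)
    then show ?thesis using PA[OF that] Pw[OF that] by (simp add: is_path_def)
  qed
  have Pdisj: "arc_disjoint k PP"
    unfolding arc_disjoint_def
  proof (intro allI impI)
    fix i j assume h: "i < k" "j < k" "i \<noteq> j"
    then have "set (Q i) \<inter> set (Q j) = {}" using dq by (simp add: disjoint_paths_def arc_disjoint_def)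
    then show "set (PP i) \<inter> set (PP j) = {}" unfolding Qi[OF h(1)] Qi[OF h(2)] by auto
  qed
  have Cinj: "C i j \<noteq> C i' j" if "i < k" "i' < k" "i \<noteq> i'" "j < n" for i i' j
  proof
    assume eq: "C i j = C i' j"
    have "set (Q i) \<inter> set (Q i') = {}" using dq that by (simp add: disjoint_paths_def arc_disjoint_def)
    moreover have "Inr (j, C i j) \<in> set (Q i)" unfolding Qi[OF that(1)] using that(4) by auto
    moreover have "Inr (j, C i j) \<in> set (Q i')" unfolding Qi[OF that(2)] eq using that(4) by auto
    ultimately show False by blast
  qed
  have one: "card {i. i < k \<and> C i j = 0} = 1" if "j < n" for j
  proof -
    have inj: "inj_on (\<lambda>i. C i j) {..<k}" using Cinj that unfolding inj_on_def by blast
    have "(\<lambda>i. C i j) ` {..<k} \<subseteq> {..<k}" using Ck that by auto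
    then have "(\<lambda>i. C i j) ` {..<k} = {..<k}" using endo_inj_surj[OF _ _ inj] by simp
    moreover have "0 \<in> {..<k}" using k1 by simp
    ultimately obtain i0 where i0: "i0 < k" "C i0 j = 0" by (metis imageE lessThan_iff)
    have "{i. i < k \<and> C i j = 0} = {i0}" using i0 Cinj that by fastforce
    then show ?thesis by simp
  qed
  define cnt where "cnt i = card {j. j < n \<and> C i j = 0}" for i
  define \<sigma> where "\<sigma> i = Suc (cnt i)" for i
  have "(\<Sum>i<k. cnt i) = (\<Sum>i<k. \<Sum>j<n. if C i j = 0 then 1 else 0)"
    unfolding cnt_def card_as_sum ..
  also have "\<dots> = (\<Sum>j<n. \<Sum>i<k. if C i j = 0 then 1 else 0)" by (rule sum.swap)
  also have "\<dots> = (\<Sum>j<n. 1)"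
    by (intro sum.cong refl) (simp add: one card_as_sum[symmetric])
  finally have "(\<Sum>i<k. cnt i) = n" by simp
  then have ssum: "(\<Sum>i<k. \<sigma> i) = d" unfolding \<sigma>_def Suc_eq_plus1 sum.distrib using kd n_def by simp
  have cr: "convoy_routing A ta ha s t d k PP \<sigma>"
    unfolding convoy_routing_def disjoint_paths_def using k1 kd Ppath Pdisj ssum by (auto simp: \<sigma>_def)
  have len: "path_length (Dk_time \<tau> \<Delta>) (Q i) = path_length \<tau> (PP i) + (\<sigma> i - 1) * \<Delta>" if "i < k" for i
    unfolding Qi[OF that] gadget_len \<sigma>_def cnt_def by simp
  have "makespan \<tau> \<Delta> k PP \<sigma> = max_length (Dk_time \<tau> \<Delta>) k Q"
    unfolding max_length_def makespan_def using len by (metis (no_types, lifting) image_cong lessThan_iff)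
  then show ?thesis using cr by blast
qed


theorem mainTheorem7:
  fixes V :: "'v set" and A :: "'a set" and ta ha :: "'a \<Rightarrow> 'v" and s t :: 'v
    and \<tau> :: "'a \<Rightarrow> nat" and d \<Delta> k :: nat
  assumes "finite V" and "finite A"
    and "\<forall>a\<in>A. ta a \<in> V \<and> ha a \<in> V"
    and "s \<in> V" and "t \<in> V"
    and "1 \<le> d" and "1 \<le> \<Delta>"
    and "1 \<le> k" and "k \<le> d"
  shows
    "(\<forall>P \<sigma>. convoy_routing A ta ha s t d k P \<sigma> \<longrightarrow>
        (\<exists>Q. disjoint_paths (Dk_arcs A d k) (Dk_tail ta d k s) (Dk_head ha d k s)
               (Dk_source d k s) (Inl t) k Q
             \<and> max_length (Dk_time \<tau> \<Delta>) k Q = makespan \<tau> \<Delta> k P \<sigma>))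
   \<and> (\<forall>Q. disjoint_paths (Dk_arcs A d k) (Dk_tail ta d k s) (Dk_head ha d k s)
               (Dk_source d k s) (Inl t) k Q \<longrightarrow>
        (\<exists>P \<sigma>. convoy_routing A ta ha s t d k P \<sigma>
             \<and> makespan \<tau> \<Delta> k P \<sigma> = max_length (Dk_time \<tau> \<Delta>) k Q))
   \<and> ((\<exists>P \<sigma>. convoy_routing A ta ha s t d k P \<sigma>) \<longleftrightarrow>
        (\<exists>Q. disjoint_paths (Dk_arcs A d k) (Dk_tail ta d k s) (Dk_head ha d k s)
               (Dk_source d k s) (Inl t) k Q))
   \<and> ((\<exists>P \<sigma>. convoy_routing A ta ha s t d k P \<sigma>) \<longrightarrow>
        Min {makespan \<tau> \<Delta> k P \<sigma> | P \<sigma>. convoy_routing A ta ha s t d k P \<sigma>}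
      = Min {max_length (Dk_time \<tau> \<Delta>) k Q | Q. disjoint_paths (Dk_arcs A d k)
               (Dk_tail ta d k s) (Dk_head ha d k s) (Dk_source d k s) (Inl t) k Q})"
  proof -
  have F: "\<forall>P \<sigma>. convoy_routing A ta ha s t d k P \<sigma> \<longrightarrow>
        (\<exists>Q. disjoint_paths (Dk_arcs A d k) (Dk_tail ta d k s) (Dk_head ha d k s)
               (Dk_source d k s) (Inl t) k Q
             \<and> max_length (Dk_time \<tau> \<Delta>) k Q = makespan \<tau> \<Delta> k P \<sigma>)"
    by (intro allI impI) (rule fwd)
  have B: "\<forall>Q. disjoint_paths (Dk_arcs A d k) (Dk_tail ta d k s) (Dk_head ha d k s)
               (Dk_source d k s) (Inl t) k Q \<longrightarrow>
        (\<exists>P \<sigma>. convoy_routing A ta ha s t d k P \<sigma>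
             \<and> makespan \<tau> \<Delta> k P \<sigma> = max_length (Dk_time \<tau> \<Delta>) k Q)"
    by (intro allI impI) (rule bwd[OF _ assms(8,9)])
  have E: "{makespan \<tau> \<Delta> k P \<sigma> | P \<sigma>. convoy_routing A ta ha s t d k P \<sigma>}
      = {max_length (Dk_time \<tau> \<Delta>) k Q | Q. disjoint_paths (Dk_arcs A d k)
               (Dk_tail ta d k s) (Dk_head ha d k s) (Dk_source d k s) (Inl t) k Q}"
  proof (intro set_eqI iffI)
    fix x assume "x \<in> {makespan \<tau> \<Delta> k P \<sigma> | P \<sigma>. convoy_routing A ta ha s t d k P \<sigma>}"
    then show "x \<in> {max_length (Dk_time \<tau> \<Delta>) k Q | Q. disjoint_paths (Dk_arcs A d k)
               (Dk_tail ta d k s) (Dk_head ha d k s) (Dk_source d k s) (Inl t) k Q}"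
    proof -
      obtain P \<sigma> where x: "x = makespan \<tau> \<Delta> k P \<sigma>" "convoy_routing A ta ha s t d k P \<sigma>"
        using \<open>x \<in> _\<close> by blast
      then obtain Q where "disjoint_paths (Dk_arcs A d k) (Dk_tail ta d k s) (Dk_head ha d k s)
               (Dk_source d k s) (Inl t) k Q" "max_length (Dk_time \<tau> \<Delta>) k Q = makespan \<tau> \<Delta> k P \<sigma>"
        using F by blast
      then show ?thesis using x apply (simp only: mem_Collect_eq)
        apply (rule exI[of _ Q]) apply simp done
    qed
  next
    fix x assume "x \<in> {max_length (Dk_time \<tau> \<Delta>) k Q | Q. disjoint_paths (Dk_arcs A d k)
               (Dk_tail ta d k s) (Dk_head ha d k s) (Dk_source d k s) (Inl t) k Q}"
    then show "x \<in> {makespan \<tau> \<Delta> k P \<sigma> | P \<sigma>. convoy_routing A ta ha s t d k P \<sigma>}"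
    proof -
      obtain Q where x: "x = max_length (Dk_time \<tau> \<Delta>) k Q" "disjoint_paths (Dk_arcs A d k) (Dk_tail ta d k s) (Dk_head ha d k s)
               (Dk_source d k s) (Inl t) k Q"
        using \<open>x \<in> _\<close> by blast
      then obtain P \<sigma> where "convoy_routing A ta ha s t d k P \<sigma>" "makespan \<tau> \<Delta> k P \<sigma> = max_length (Dk_time \<tau> \<Delta>) k Q"
        using B by blast
      then show ?thesis using x apply (simp only: mem_Collect_eq)
        apply (rule exI[of _ P], rule exI[of _ \<sigma>]) apply simp done
    qed
  qed
  have I: "(\<exists>P \<sigma>. convoy_routing A ta ha s t d k P \<sigma>) \<longleftrightarrow>
        (\<exists>Q. disjoint_paths (Dk_arcs A d k) (Dk_tail ta d k s) (Dk_head ha d k s)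
               (Dk_source d k s) (Inl t) k Q)"
  proof
    assume "\<exists>P \<sigma>. convoy_routing A ta ha s t d k P \<sigma>"
    then obtain P \<sigma> where "convoy_routing A ta ha s t d k P \<sigma>" by blast
    then show "\<exists>Q. disjoint_paths (Dk_arcs A d k) (Dk_tail ta d k s) (Dk_head ha d k s)
               (Dk_source d k s) (Inl t) k Q" using F by blast
  next
    assume "\<exists>Q. disjoint_paths (Dk_arcs A d k) (Dk_tail ta d k s) (Dk_head ha d k s)
               (Dk_source d k s) (Inl t) k Q"
    then obtain Q where "disjoint_paths (Dk_arcs A d k) (Dk_tail ta d k s) (Dk_head ha d k s)
               (Dk_source d k s) (Inl t) k Q" by blast
    then show "\<exists>P \<sigma>. convoy_routing A ta ha s t d k P \<sigma>" using B by blast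
  qed
  show ?thesis
    apply (intro conjI)
       apply (rule F)
      apply (rule B)
     apply (rule I)
    apply (rule impI)
    apply (rule arg_cong[where f=Min])
    apply (rule E)
    done
qed

end
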